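(* Let $\mathcal C$ be a $\Delta$-complex labeled over $B(X,P)$, let $C$ be a $k$-cell of $\mathcal C$ with $k\ge2$ and characteristic map $\sigma\colon\Delta^k\to\mathcal C$. Let $q$ be any closed path in the $1$-skeleton of $\Delta^k$ based at $v_0$ (a sequence of edges of $\Delta^k$, each traversed in either direction), and let $p=\sigma(q)$ be its image, a path of $1$-cells and inverses of $1$-cells in $\mathcal C$. Then $\ell(C)\le\ell(p)$ in $M(X,P)$ with respect to the natural partial order.
   Context: A $\Delta$-complex is a CW-complex in which each $k$-cell $c$ has a distinguished characteristic map $\sigma_c\colon\Delta^k\to\mathcal C$, $\Delta^k=[v_0,\dots,v_k]$ the standard simplex with ordered vertices, such that the restriction of $\sigma_c$ to each $(k-1)$-face (identified order-preservingly with $\Delta^{k-1}$) is the distinguished characteristic map of a $(k-1)$-cell; each edge $[v_i,v_j]$, $i<j$, is directed from $v_i$ to $v_j$, and a $1$-cell $e$ is directed from $\sigma_e(v_0)$ to $\sigma_e(v_1)$; traversing it backwards is written $e^{-1}$. An immersion is a continuous map that is a local homeomorphism onto its image and commutes with characteristic maps (each $k$-cell $d$ maps onto a $k$-cell with $f\circ\sigma_d=\sigma_{f(d)}$). $B(X,P)$ is a $\Delta$-complex with one $0$-cell, $1$-cells indexed by $X$, $k$-cells ($2\le k\le n$) indexed by $P_k$, index sets pairwise disjoint, $P=\bigcup P_k$. $\mathcal C$ is labeled over $B(X,P)$ via an immersion $f_{\mathcal C}\colon\mathcal C\to B(X,P)$; $\ell(c)$ is the index of $f_{\mathcal C}(c)$,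 $\ell(e^{-1})=\ell(e)^{-1}$, and the label of a path is the concatenation of labels, read in $M(X,P)$. Boundary labels: for a $k$-cell $c$ ($k\ge2$) with characteristic map $\sigma$, let $c_i$ be the $(k-1)$-cell whose characteristic map is $\sigma$ restricted to the face omitting $v_i$, and $e(c)=\sigma([v_0,v_1])$; $bl(c)=\ell(\sigma[v_0,v_1])\ell(\sigma[v_1,v_2])\ell(\sigma[v_0,v_2])^{-1}$ if $k=2$, and $bl(c)=\ell(c_k)\cdots\ell(c_1)\ell(e(c))\ell(c_0)\ell(e(c))^{-1}$ if $k\ge3$; $bl(\rho)$ for $\rho\in P$ is the boundary label of the cell of $B(X,P)$ labeled $\rho$. $M(X,P)$ is the inverse monoid presented by generators $X\cup P$ and relations $\rho^2=\rho$ and $\rho=\rho\,bl(\rho)$ for all $\rho\in P$. The natural partial order on an inverse monoid: $a\le b$ iff $a=eb$ for some idempotent $e$. *)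

theory Defs
  imports Main
begin

text \<open>Generators: X is the type 'x, P is the type 'p (disjoint by construction).
  A letter is a generator together with a flag: True means the formal inverse.\<close>
datatype ('x,'p) gen = GX 'x | GP 'p
type_synonym ('x,'p) word = "(('x,'p) gen \<times> bool) list"

definition winv :: "('x,'p) word \<Rightarrow> ('x,'p) word" where
  "winv w = rev (map (\<lambda>(a,b). (a, \<not> b)) w)"

text \<open>face c i = the (k-1)-cell obtained by restricting the characteristic map of the
  k-cell c to the face omitting v_i.\<close>
definition semi_simplicial :: "'c set \<Rightarrow> ('c \<Rightarrow> nat) \<Rightarrow> ('c \<Rightarrow> nat \<Rightarrow> 'c) \<Rightarrow> bool" where
  "semi_simplicial cells dim face \<longleftrightarrow>
     (\<forall>c\<in>cells. \<forall>i. 0 < dim c \<and> i \<le> dim c \<longrightarrow>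
         face c i \<in> cells \<and> dim (face c i) = dim c - 1) \<and>
     (\<forall>c\<in>cells. \<forall>i j. 2 \<le> dim c \<and> i < j \<and> j \<le> dim c \<longrightarrow>
         face (face c j) i = face (face c i) (j - 1))"

text \<open>Restriction of the characteristic map of a k-cell c to the face spanned by the
  vertices with indices in S (deleting the other vertices, largest first).\<close>
definition restr :: "('c \<Rightarrow> nat \<Rightarrow> 'c) \<Rightarrow> 'c \<Rightarrow> nat \<Rightarrow> nat set \<Rightarrow> 'c" where
  "restr face c k S = fold (\<lambda>i d. face d i) (rev (sorted_list_of_set ({0..k} - S))) c"

definition edge :: "('c \<Rightarrow> nat \<Rightarrow> 'c) \<Rightarrow> 'c \<Rightarrow> nat \<Rightarrow> nat \<Rightarrow> nat \<Rightarrow> 'c" where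
  "edge face c k i j = restr face c k {i, j}"

text \<open>One 0-cell Pt, 1-cells Ed x (x in X), higher cells Hi r (r in P), where
  r lies in P_k for k = pdim r.\<close>
datatype ('x,'p) bcell = Pt | Ed 'x | Hi 'p

fun bdim :: "('p \<Rightarrow> nat) \<Rightarrow> ('x,'p) bcell \<Rightarrow> nat" where
  "bdim pdim Pt = 0"
| "bdim pdim (Ed x) = 1"
| "bdim pdim (Hi r) = pdim r"

fun blab :: "('x,'p) bcell \<Rightarrow> ('x,'p) word" where
  "blab Pt = []"
| "blab (Ed x) = [(GX x, False)]"
| "blab (Hi r) = [(GP r, False)]"

definition bl :: "('p \<Rightarrow> nat) \<Rightarrow> (('x,'p) bcell \<Rightarrow> nat \<Rightarrow> ('x,'p) bcell) \<Rightarrow> 'p \<Rightarrow> ('x,'p) word" where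
  "bl pdim bface r =
     (let k = pdim r; c = Hi r; e = edge bface c k 0 1 in
      if k = 2 then blab (bface c 2) @ blab (bface c 0) @ winv (blab (bface c 1))
      else concat (map (\<lambda>i. blab (bface c i)) (rev [1..<Suc k]))
           @ blab e @ blab (bface c 0) @ winv (blab e))"

text \<open>The congruence presenting M(X,P) as an inverse monoid: monoid with involution winv,
  Wagner's relations (giving the free inverse monoid), plus rho^2 = rho and rho = rho bl(rho).\<close>
inductive mcong :: "('p \<Rightarrow> nat) \<Rightarrow> (('x,'p) bcell \<Rightarrow> nat \<Rightarrow> ('x,'p) bcell)
    \<Rightarrow> ('x,'p) word \<Rightarrow> ('x,'p) word \<Rightarrow> bool"
  for pdim bface where
  refl: "mcong pdim bface u u"
| sym: "mcong pdim bface u v \<Longrightarrow> mcong pdim bface v u"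
| trans: "mcong pdim bface u v \<Longrightarrow> mcong pdim bface v w \<Longrightarrow> mcong pdim bface u w"
| ctx: "mcong pdim bface u v \<Longrightarrow> mcong pdim bface (a @ u @ b) (a @ v @ b)"
| inv1: "mcong pdim bface (u @ winv u @ u) u"
| inv2: "mcong pdim bface (u @ winv u @ v @ winv v) (v @ winv v @ u @ winv u)"
| idem: "mcong pdim bface [(GP r, False), (GP r, False)] [(GP r, False)]"
| rel: "mcong pdim bface [(GP r, False)] ((GP r, False) # bl pdim bface r)"

definition mle :: "('p \<Rightarrow> nat) \<Rightarrow> (('x,'p) bcell \<Rightarrow> nat \<Rightarrow> ('x,'p) bcell)
    \<Rightarrow> ('x,'p) word \<Rightarrow> ('x,'p) word \<Rightarrow> bool" where
  "mle pdim bface a b \<longleftrightarrow>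
     (\<exists>e. mcong pdim bface (e @ e) e \<and> mcong pdim bface a (e @ b))"

definition labeling :: "'c set \<Rightarrow> ('c \<Rightarrow> nat) \<Rightarrow> ('c \<Rightarrow> nat \<Rightarrow> 'c) \<Rightarrow> ('p \<Rightarrow> nat)
    \<Rightarrow> (('x,'p) bcell \<Rightarrow> nat \<Rightarrow> ('x,'p) bcell) \<Rightarrow> ('c \<Rightarrow> ('x,'p) bcell) \<Rightarrow> bool" where
  "labeling cells dim face pdim bface f \<longleftrightarrow>
     (\<forall>c\<in>cells. bdim pdim (f c) = dim c) \<and>
     (\<forall>c\<in>cells. \<forall>i. 0 < dim c \<and> i \<le> dim c \<longrightarrow> f (face c i) = bface (f c) i)"

text \<open>A closed path in the 1-skeleton of Delta^k based at v_0, given by its vertex sequence.\<close>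
definition closed_path :: "nat \<Rightarrow> nat list \<Rightarrow> bool" where
  "closed_path k ws \<longleftrightarrow> ws \<noteq> [] \<and> hd ws = 0 \<and> last ws = 0 \<and> (\<forall>w\<in>set ws. w \<le> k) \<and>
     (\<forall>t. Suc t < length ws \<longrightarrow> ws ! t \<noteq> ws ! Suc t)"

definition path_label :: "('c \<Rightarrow> nat \<Rightarrow> 'c) \<Rightarrow> ('c \<Rightarrow> ('x,'p) bcell) \<Rightarrow> 'c \<Rightarrow> nat
    \<Rightarrow> nat list \<Rightarrow> ('x,'p) word" where
  "path_label face f c k ws =
     concat (map (\<lambda>(a,b). if a < b then blab (f (edge face c k a b))
                          else winv (blab (f (edge face c k b a)))) (zip ws (tl ws)))"

end

theory Submission
  imports Defs
begin


lemma winv_append[simp]: "winv (u@v) = winv v @ winv u" by (simp add: winv_def)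
lemma winv_Nil[simp]: "winv [] = []" by (simp add: winv_def)
lemma winv_winv[simp]: "winv (winv u) = u" by (induct u) (auto simp: winv_def)

context
  fixes P :: "'p \<Rightarrow> nat" and B :: "('x,'p) bcell \<Rightarrow> nat \<Rightarrow> ('x,'p) bcell"
begin

abbreviation eqv (infix "\<approx>" 50) where "u \<approx> v \<equiv> mcong P B u v"
abbreviation idm where "idm e \<equiv> e @ e \<approx> e"

lemmas [trans] = mcong.trans[of P B]
lemma msym: "u \<approx> v \<Longrightarrow> v \<approx> u" by (rule mcong.sym)
lemma mtr: "u \<approx> v \<Longrightarrow> v \<approx> w \<Longrightarrow> u \<approx> w" by (rule mcong.trans)
lemma msub: "u \<approx> v \<Longrightarrow> x = a@u@b \<Longrightarrow> y = a@v@b \<Longrightarrow> x \<approx> y"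
  by (simp add: mcong.ctx)
lemma capp: "u \<approx> u' \<Longrightarrow> v \<approx> v' \<Longrightarrow> u@v \<approx> u'@v'"
  by (rule mtr[OF msub[of u u' _ "[]" v] msub[of v v' _ u' "[]"]]) auto
lemma inv1': "u @ winv u @ u @ b \<approx> u @ b"
  using msub[OF mcong.inv1[of P B u], of _ "[]" b] by simp

lemma idem_self_inv: assumes e: "idm e" shows "e \<approx> winv e"
proof -
  have s1: "winv e \<approx> (winv e @ e) @ (e @ winv e)"
  proof -
    have "winv e \<approx> winv e @ e @ winv e" using mcong.inv1[of P B "winv e"] by (simp add: msym)
    also have "\<dots> \<approx> winv e @ (e @ e) @ winv e" by (rule msub[OF msym[OF e]]) auto
    finally show ?thesis by simp
  qed
  have s2: "(winv e @ e) @ (e @ winv e) \<approx> (e @ winv e) @ (winv e @ e)"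
    using mcong.inv2[of P B "winv e" e] by simp
  have "e \<approx> e @ e" using e by (rule msym)
  also have "\<dots> \<approx> (e @ winv e @ e) @ (e @ winv e @ e)"
    using capp[OF msym[OF mcong.inv1] msym[OF mcong.inv1]] .
  also have "\<dots> \<approx> e @ ((e @ winv e) @ (winv e @ e)) @ e"
    by (rule msub[OF s2, of _ e e]) auto
  also have "\<dots> = (e @ e) @ winv e @ winv e @ (e @ e)" by simp
  also have "\<dots> \<approx> e @ winv e @ winv e @ e"
    using capp[OF e capp[OF mcong.refl capp[OF mcong.refl e]]] by simp
  also have "\<dots> \<approx> winv e" using msym[OF mtr[OF s1 s2]] by simp
  finally show ?thesis .
qed

lemma idem_comm: assumes "idm e" "idm f" shows "e @ f \<approx> f @ e"
proof -
  have a: "e \<approx> e @ winv e" by (rule mtr[OF msym[OF assms(1)] capp[OF mcong.refl idem_self_inv[OF assms(1)]]])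
  have b: "f \<approx> f @ winv f" by (rule mtr[OF msym[OF assms(2)] capp[OF mcong.refl idem_self_inv[OF assms(2)]]])
  have "e @ f \<approx> (e @ winv e) @ (f @ winv f)" using capp[OF a b] .
  also have "\<dots> \<approx> (f @ winv f) @ (e @ winv e)" using mcong.inv2[of P B e f] by simp
  also have "\<dots> \<approx> f @ e" using capp[OF msym[OF b] msym[OF a]] .
  finally show ?thesis .
qed

lemma idm_wwinv: "idm (x @ winv x)"
  using inv1'[of x "winv x"] by simp

lemma inv_unique: assumes h1: "x @ y @ x \<approx> x" and h2: "y @ x @ y \<approx> y" shows "y \<approx> winv x"
proof -
  let ?z = "winv x"
  have Ixy: "idm (x@y)" using capp[OF h1 mcong.refl, of y] by simp
  have Iyx: "idm (y@x)" using capp[OF h2 mcong.refl, of x] by simp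
  have Ixz: "idm (x@?z)" by (rule idm_wwinv)
  have Izx: "idm (?z@x)" using idm_wwinv[of ?z] by simp
  have "y \<approx> y @ x @ y" using h2 by (rule msym)
  also have "\<dots> \<approx> y @ (x @ ?z @ x) @ y" by (rule msub[OF msym[OF mcong.inv1]]) auto
  also have "\<dots> = (y @ x) @ (?z @ x) @ y" by simp
  also have "\<dots> \<approx> (?z @ x) @ (y @ x) @ y" by (rule msub[OF idem_comm[OF Iyx Izx], of _ "[]" y]) auto
  also have "\<dots> = ?z @ x @ (y @ x @ y)" by simp
  also have "\<dots> \<approx> ?z @ x @ y" by (rule msub[OF h2, of _ "?z @ x" "[]"]) auto
  finally have A: "y \<approx> ?z @ x @ y" .
  have "?z \<approx> ?z @ x @ ?z" using mcong.inv1[of P B ?z] by (simp add: msym)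
  also have "\<dots> \<approx> ?z @ (x @ y @ x) @ ?z" by (rule msub[OF msym[OF h1]]) auto
  also have "\<dots> = ?z @ (x @ y) @ (x @ ?z)" by simp
  also have "\<dots> \<approx> ?z @ (x @ ?z) @ (x @ y)" by (rule msub[OF idem_comm[OF Ixy Ixz], of _ ?z "[]"]) auto
  also have "\<dots> = (?z @ x @ ?z) @ x @ y" by simp
  also have "\<dots> \<approx> ?z @ x @ y" by (rule msub[OF mcong.inv1, of _ "[]"]) auto
  finally have Bz: "?z \<approx> ?z @ x @ y" .
  show ?thesis using A msym[OF Bz] by (rule mtr)
qed

lemma winv_cong: assumes "u \<approx> v" shows "winv u \<approx> winv v"
proof -
  have "u @ winv v @ u \<approx> v @ winv v @ v" using capp[OF assms capp[OF mcong.refl assms]] .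
  then have 1: "u @ winv v @ u \<approx> u" by (rule mtr[OF _ mtr[OF mcong.inv1 msym[OF assms]]])
  have "winv v @ u @ winv v \<approx> winv v @ v @ winv v" by (rule msub[OF assms]) auto
  then have 2: "winv v @ u @ winv v \<approx> winv v" using mcong.inv1[of P B "winv v"] by (simp add: mtr)
  show ?thesis using inv_unique[OF 1 2] by (rule msym)
qed

definition le where "le e w \<longleftrightarrow> e \<approx> e @ w"

lemma le_rinv: assumes "idm e" "le e w" shows "e \<approx> winv w @ e"
proof -
  have a: "winv e \<approx> winv w @ winv e" using winv_cong[of e "e@w"] assms(2) unfolding le_def by simp
  have b: "e \<approx> winv e" using assms(1) by (rule idem_self_inv)
  show ?thesis by (rule mtr[OF b mtr[OF a capp[OF mcong.refl msym[OF b]]]])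
qed

lemma le_ww: assumes "idm e" "le e w" shows "le e (w @ winv w)"
proof -
  have "e \<approx> e @ e" using assms(1) by (rule msym)
  also have "\<dots> \<approx> (e @ w) @ (winv w @ e)" using capp[OF assms(2)[unfolded le_def] le_rinv[OF assms]] .
  also have "\<dots> = e @ (w @ winv w) @ e" by simp
  also have "\<dots> \<approx> e @ e @ (w @ winv w)" by (rule msub[OF idem_comm[OF idm_wwinv[of w] assms(1)], of _ e "[]"]) auto
  also have "\<dots> \<approx> e @ (w @ winv w)" by (rule msub[OF assms(1), of _ "[]"]) auto
  finally show ?thesis by (simp add: le_def)
qed

lemma le_inv: assumes "idm e" "le e w" shows "le e (winv w)"
proof -
  have r: "e \<approx> winv w @ e" by (rule le_rinv[OF assms])
  have "e @ winv w \<approx> (winv w @ e) @ winv w" by (rule capp[OF r mcong.refl])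
  also have "\<dots> \<approx> winv w @ (e @ w) @ winv w" by (rule msub[of e "e@w"]) (use assms(2) le_def in auto)
  also have "\<dots> = winv w @ e @ (w @ winv w)" by simp
  also have "\<dots> \<approx> winv w @ (w @ winv w) @ e" by (rule msub[OF idem_comm[OF assms(1) idm_wwinv[of w]], of _ "winv w" "[]"]) auto
  also have "\<dots> \<approx> winv w @ e" using inv1'[of "winv w" e] by simp
  also have "\<dots> \<approx> e" using r by (rule msym)
  finally show ?thesis by (simp add: le_def msym)
qed

lemma le_G: assumes "idm e" "le e (x @ winv y)" shows "e @ x \<approx> e @ y"
proof -
  have w: "le e (x @ winv y @ y @ winv x)" using le_ww[OF assms] by simp
  have "e @ x \<approx> (e @ x @ winv y @ y @ winv x) @ x" using capp[OF w[unfolded le_def] mcong.refl] by simp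
  also have "\<dots> = e @ x @ (winv y @ y @ winv x @ x)" by simp
  also have "\<dots> \<approx> e @ x @ (winv x @ x @ winv y @ y)"
    by (rule msub[OF mcong.inv2[of P B "winv y" "winv x"], of _ "e@x" "[]"]) auto
  also have "\<dots> = (e @ x @ winv x @ x) @ winv y @ y" by simp
  also have "\<dots> \<approx> (e @ x) @ winv y @ y" by (rule msub[OF mcong.inv1[of P B x], of _ e "winv y @ y"]) auto
  also have "\<dots> = (e @ x @ winv y) @ y" by simp
  also have "\<dots> \<approx> e @ y" using capp[OF msym[OF assms(2)[unfolded le_def]] mcong.refl] .
  finally show ?thesis .
qed

lemma le_trans: assumes "le e f" "le f w" shows "le e w"
proof -
  have 1: "e \<approx> e @ f" "f \<approx> f @ w" using assms le_def by auto
  have "e @ w \<approx> (e @ f) @ w" by (rule capp[OF 1(1) mcong.refl])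
  also have "\<dots> = e @ f @ w" by simp
  also have "\<dots> \<approx> e @ f" by (rule capp[OF mcong.refl msym[OF 1(2)]])
  also have "\<dots> \<approx> e" by (rule msym[OF 1(1)])
  finally show ?thesis by (simp add: le_def msym)
qed
lemma le_app: assumes "le e u" "le e v" shows "le e (u @ v)"
proof -
  have 1: "e \<approx> e @ u" "e \<approx> e @ v" using assms le_def by auto
  have "e \<approx> e @ v" by (rule 1(2))
  also have "\<dots> \<approx> (e @ u) @ v" by (rule capp[OF 1(1) mcong.refl])
  finally show ?thesis by (simp add: le_def)
qed

lemma idm_app: assumes "idm f" "idm g" shows "idm (f @ g)"
proof -
  have "(f @ g) @ (f @ g) = f @ (g @ f) @ g" by simp
  also have "\<dots> \<approx> f @ (f @ g) @ g" by (rule msub[OF idem_comm[OF assms(2,1)]]) auto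
  also have "\<dots> = (f @ f) @ (g @ g)" by simp
  also have "\<dots> \<approx> f @ g" by (rule capp[OF assms])
  finally show ?thesis .
qed

lemma le_split: assumes "idm f" "idm g" "le e (f @ g)" shows "le e f" "le e g"
proof -
  have h: "e \<approx> e @ f @ g" using assms(3) le_def by simp
  have "e @ f \<approx> (e @ f @ g) @ f" by (rule capp[OF h mcong.refl])
  also have "\<dots> = e @ f @ (g @ f)" by simp
  also have "\<dots> \<approx> e @ f @ (f @ g)" by (rule msub[OF idem_comm[OF assms(2,1)], of _ "e@f" "[]"]) auto
  also have "\<dots> = e @ (f @ f) @ g" by simp
  also have "\<dots> \<approx> e @ f @ g" by (rule msub[OF assms(1), of _ e g]) auto
  also have "\<dots> \<approx> e" by (rule msym[OF h])
  finally show "le e f" by (simp add: le_def msym)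
  have "e @ g \<approx> (e @ f @ g) @ g" by (rule capp[OF h mcong.refl])
  also have "\<dots> = (e @ f) @ (g @ g) @ []" by simp
  also have "\<dots> \<approx> (e @ f) @ g @ []" by (rule msub[OF assms(2), of _ "e @ f" "[]"]) auto
  also have "\<dots> \<approx> e" using msym[OF h] by simp
  finally show "le e g" by (simp add: le_def msym)
qed

lemma idm_conj: assumes "idm y" shows "idm (x @ y @ winv x)"
proof -
  have I: "idm (winv x @ x)" using idm_wwinv[of "winv x"] by simp
  have "(x @ y @ winv x) @ (x @ y @ winv x) = x @ (y @ (winv x @ x)) @ y @ winv x" by simp
  also have "\<dots> \<approx> x @ ((winv x @ x) @ y) @ y @ winv x" by (rule msub[OF idem_comm[OF assms I]]) auto
  also have "\<dots> = (x @ winv x @ x) @ (y @ y) @ winv x" by simp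
  also have "\<dots> \<approx> x @ y @ winv x" by (rule capp[OF mcong.inv1 capp[OF assms mcong.refl]])
  finally show ?thesis .
qed

lemma idm_concat: "\<forall>w\<in>set ws. idm w \<Longrightarrow> idm (concat ws)"
proof (induct ws)
  case (Cons a ws) then show ?case using idm_app[of a "concat ws"] by simp
qed (simp add: mcong.refl)

lemma le_concat: "\<forall>w\<in>set ws. idm w \<Longrightarrow> idm t \<Longrightarrow> le e (concat ws @ t) \<Longrightarrow> \<forall>w\<in>set ws. le e w"
proof (induct ws)
  case (Cons a ws)
  have "idm (concat ws)" using Cons.prems(1) idm_concat[of ws] by simp
  then have "idm (concat ws @ t)" using idm_app Cons.prems(2) by blast
  moreover have "idm a" using Cons.prems(1) by simp
  moreover have "le e (a @ (concat ws @ t))" using Cons.prems(3) by simp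
  ultimately have sp: "le e a" "le e (concat ws @ t)" using le_split[of a "concat ws @ t" e] by blast+
  have "\<forall>w\<in>set ws. idm w" using Cons.prems(1) by simp
  then have "\<forall>w\<in>set ws. le e w" using Cons.hyps Cons.prems(2) sp(2) by blast
  then show ?case using sp(1) by simp
qed simp

end


definition rem :: "('c \<Rightarrow> nat \<Rightarrow> 'c) \<Rightarrow> 'c \<Rightarrow> nat list \<Rightarrow> 'c" where
  "rem face c L = fold (\<lambda>i d. face d i) L c"

lemma rem_Cons[simp]: "rem face c (l # L) = rem face (face c l) L" by (simp add: rem_def)
lemma rem_Nil[simp]: "rem face c [] = c" by (simp add: rem_def)
lemma rem_append: "rem face c (L1 @ L2) = rem face (rem face c L1) L2" by (simp add: rem_def)

lemma rem_commute:
  assumes ss: "semi_simplicial cells dim face"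
  shows "c \<in> cells \<Longrightarrow> sorted_wrt (>) L \<Longrightarrow> \<forall>x\<in>set L. m < x \<and> x \<le> dim c \<Longrightarrow> length L + 2 \<le> dim c
    \<Longrightarrow> rem face c (L @ [m]) = rem face (face c m) (map (\<lambda>x. x - 1) L)"
proof (induct L arbitrary: c)
  case Nil then show ?case by simp
next
  case (Cons l L)
  have fc: "face c l \<in> cells" "dim (face c l) = dim c - 1"
    using ss Cons.prems unfolding semi_simplicial_def by auto
  have IH: "rem face (face c l) (L @ [m]) = rem face (face (face c l) m) (map (\<lambda>x. x - 1) L)"
    using Cons.hyps[OF fc(1)] Cons.prems fc(2) by force
  have id: "face (face c l) m = face (face c m) (l - 1)"
    using ss Cons.prems unfolding semi_simplicial_def by auto
  show ?case using IH id by simp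
qed

lemma desc_eq: "sorted_wrt (>) L \<Longrightarrow> rev (sorted_list_of_set (set L)) = L"
proof -
  assume a: "sorted_wrt (>) L"
  have "sorted_wrt (<) (rev L)" using a by (simp add: sorted_wrt_rev)
  moreover have "sorted_wrt (<) (sorted_list_of_set (set L))" by simp
  ultimately have "sorted_list_of_set (set L) = rev L"
    by (metis set_rev strict_sorted_equal sorted_list_of_set.set_sorted_key_list_of_set finite_set)
  then show ?thesis by simp
qed

definition sh :: "nat \<Rightarrow> nat \<Rightarrow> nat" where "sh m x = (if x < m then x else x - 1)"

lemma edge_face:
  assumes ss: "semi_simplicial cells dim face" and c: "c \<in> cells" "dim c = K"
    and ab: "a < b" "b \<le> K" and m: "m \<le> K" "m \<noteq> a" "m \<noteq> b"
  shows "edge face c K a b = edge face (face c m) (K - 1) (sh m a) (sh m b)"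
proof -
  define A where "A = {0..K} - {a, b}"
  define DL where "DL = rev (sorted_list_of_set A)"
  have fA: "finite A" by (simp add: A_def)
  have sDL: "sorted_wrt (>) DL" using sorted_list_of_set.strict_sorted_key_list_of_set[of A]
    by (simp add: DL_def sorted_wrt_rev)
  have setDL: "set DL = A" using fA by (simp add: DL_def)
  have cardA: "card A = K - 1" using ab unfolding A_def by (simp add: card_Diff_subset)
  have lenDL: "length DL = K - 1" using fA cardA by (simp add: DL_def)
  have "m \<in> set DL" using setDL m unfolding A_def by auto
  then obtain L1 L2 where DLs: "DL = L1 @ m # L2" by (meson split_list)
  have sL: "sorted_wrt (>) L1" "sorted_wrt (>) L2" "\<forall>x\<in>set L1. m < x" "\<forall>x\<in>set L2. x < m"
    "\<forall>x\<in>set L1. \<forall>y\<in>set L2. y < x"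
    using sDL unfolding DLs by (auto simp: sorted_wrt_append)
  have set1: "set L1 = {x\<in>A. m < x}" and set2: "set L2 = {x\<in>A. x < m}"
    using setDL sL(3,4) unfolding DLs by auto
  have len1: "length L1 + 2 \<le> K" using lenDL DLs ab by simp
  have L1K: "\<forall>x\<in>set L1. m < x \<and> x \<le> dim c" using set1 c unfolding A_def by auto
  have "edge face c K a b = rem face c DL" by (simp add: edge_def restr_def rem_def DL_def A_def)
  also have "\<dots> = rem face (rem face c (L1 @ [m])) L2" unfolding DLs by (simp add: rem_append[symmetric])
  also have "\<dots> = rem face (face c m) (map (\<lambda>x. x - 1) L1 @ L2)"
    using rem_commute[OF ss c(1) sL(1) L1K] len1 c by (simp add: rem_append)
  also have "\<dots> = edge face (face c m) (K - 1) (sh m a) (sh m b)"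
  proof -
    let ?L = "map (\<lambda>x. x - 1) L1 @ L2"
    have s1: "sorted_wrt (\<lambda>x y. y - 1 < x - 1) L1"
      by (rule sorted_wrt_mono_rel[OF _ sL(1)]) (use sL(3) in force)
    have s2: "\<forall>x\<in>set L1. \<forall>y\<in>set L2. y < x - 1"
    proof (intro ballI)
      fix x y assume "x \<in> set L1" "y \<in> set L2"
      then have "m < x" "y < m" using sL(3,4) by auto
      then show "y < x - 1" by linarith
    qed
    have s: "sorted_wrt (>) ?L" using sL(2) s1 s2
      by (simp add: sorted_wrt_append sorted_wrt_map)
    have st: "set ?L = {0..K - 1} - {sh m a, sh m b}"
    proof
      show "set ?L \<subseteq> {0..K - 1} - {sh m a, sh m b}"
      proof
        fix y assume "y \<in> set ?L"
        then consider x where "x \<in> set L1" "y = x - 1" | "y \<in> set L2" by auto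
        then show "y \<in> {0..K - 1} - {sh m a, sh m b}"
        proof cases
          case 1
          then have x: "x \<le> K" "m < x" "x \<noteq> a" "x \<noteq> b" using set1 unfolding A_def by auto
          have "y \<le> K - 1" using x 1 by simp
          moreover have "y \<noteq> sh m a" using x 1 m unfolding sh_def by auto
          moreover have "y \<noteq> sh m b" using x 1 m unfolding sh_def by auto
          ultimately show ?thesis by simp
        next
          case 2
          then have x: "y \<le> K" "y < m" "y \<noteq> a" "y \<noteq> b" using set2 unfolding A_def by auto
          have "y \<le> K - 1" using x m by simp
          moreover have "y \<noteq> sh m a" using x m unfolding sh_def by auto
          moreover have "y \<noteq> sh m b" using x m unfolding sh_def by auto
          ultimately show ?thesis by simp
        qed
      qed
      show "{0..K - 1} - {sh m a, sh m b} \<subseteq> set ?L"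
      proof
        fix x assume x: "x \<in> {0..K - 1} - {sh m a, sh m b}"
        show "x \<in> set ?L"
        proof (cases "x < m")
          case True
          have xs: "x \<le> K - 1" "x \<noteq> sh m a" "x \<noteq> sh m b" using x by auto
          have "x \<noteq> a" using xs(2) True unfolding sh_def by (cases "a < m") auto
          moreover have "x \<noteq> b" using xs(3) True unfolding sh_def by (cases "b < m") auto
          ultimately have "x \<in> A" using xs(1) m unfolding A_def by auto
          then have "x \<in> set L2" using set2 True by simp
          then show ?thesis by simp
        next
          case False
          have xs: "x \<le> K - 1" "x \<noteq> sh m a" "x \<noteq> sh m b" using x by auto
          have "Suc x \<noteq> a" using xs(2) False unfolding sh_def by (cases "a < m") auto
          moreover have "Suc x \<noteq> b" using xs(3) False unfolding sh_def by (cases "b < m") auto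
          ultimately have "Suc x \<in> A" using xs(1) m ab unfolding A_def by auto
          then have "Suc x \<in> set L1" using set1 False by simp
          then show ?thesis by force
        qed
      qed
    qed
    have "rev (sorted_list_of_set ({0..K - 1} - {sh m a, sh m b})) = ?L"
      using desc_eq[OF s] st by simp
    then show ?thesis by (simp add: edge_def restr_def rem_def)
  qed
  finally show ?thesis .
qed



definition tri where
  "tri face f D K v w = blab (f (edge face D K 0 v)) @ blab (f (edge face D K v w))
     @ winv (blab (f (edge face D K 0 w)))"

lemma lab_Hi:
  assumes "labeling cells dim face pdim bface f" "D \<in> cells" "2 \<le> dim D"
  obtains r where "f D = Hi r" "pdim r = dim D"
proof -
  have "bdim pdim (f D) = dim D" using assms unfolding labeling_def by auto
  then show ?thesis using that assms(3) by (cases "f D") auto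
qed

lemma tri_le:
  assumes ss: "semi_simplicial cells dim face" and lab: "labeling cells dim face pdim bface f"
  shows "D \<in> cells \<Longrightarrow> 2 \<le> dim D \<Longrightarrow> 0 < v \<Longrightarrow> v < w \<Longrightarrow> w \<le> dim D
     \<Longrightarrow> le pdim bface (blab (f D)) (tri face f D (dim D) v w)"
proof (induct "dim D" arbitrary: D v w rule: less_induct)
  case less
  let ?K = "dim D"
  obtain r where r: "f D = Hi r" "pdim r = ?K" using lab_Hi[OF lab less.prems(1,2)] by blast
  have fface: "\<And>i. i \<le> ?K \<Longrightarrow> bface (Hi r) i = f (face D i)"
    using lab less.prems r unfolding labeling_def by auto
  have fcell: "\<And>i. i \<le> ?K \<Longrightarrow> face D i \<in> cells \<and> dim (face D i) = ?K - 1"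
    using ss less.prems unfolding semi_simplicial_def by auto
  have rel: "le pdim bface [(GP r, False)] (bl pdim bface r)"
    unfolding le_def using mcong.rel[of pdim bface r] by simp
  show ?case
  proof (cases "?K = 2")
    case True
    then have vw: "v = 1" "w = 2" using less.prems by auto
    have e01: "edge face D 2 0 1 = face D 2" and e12: "edge face D 2 1 2 = face D 0"
      and e02: "edge face D 2 0 2 = face D 1"
    proof -
      have "{0..2::nat} - {0,1} = {2}" "{0..2::nat} - {1,2} = {0}" "{0..2::nat} - {0,2} = {1}" by auto
      then show "edge face D 2 0 1 = face D 2" "edge face D 2 1 2 = face D 0" "edge face D 2 0 2 = face D 1"
        by (simp_all add: edge_def restr_def)
    qed
    have "bl pdim bface r = tri face f D (dim D) v w"
      unfolding bl_def tri_def using r True vw e01 e12 e02 fface by (simp add: Let_def)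
    then show ?thesis using rel r by simp
  next
    case False
    then have K3: "3 \<le> ?K" using less.prems by simp
    obtain i where i: "1 \<le> i" "i \<le> ?K" "i \<noteq> v" "i \<noteq> w"
    proof -
      define i where "i = (if v \<noteq> 1 then 1 else if w \<noteq> 2 then 2 else (3::nat))"
      show ?thesis by (rule that[of i]) (use less.prems K3 in \<open>auto simp: i_def\<close>)
    qed
    have Hi_face: "\<And>j. j \<le> ?K \<Longrightarrow> \<exists>r'. bface (Hi r) j = Hi r'"
    proof -
      fix j assume j: "j \<le> ?K"
      have "face D j \<in> cells" "2 \<le> dim (face D j)" using fcell[OF j] K3 by auto
      then obtain r' where "f (face D j) = Hi r'" using lab_Hi[OF lab] by metis
      then show "\<exists>r'. bface (Hi r) j = Hi r'" using fface[OF j] by simp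
    qed
    have idmB: "\<And>j. j \<le> ?K \<Longrightarrow> mcong pdim bface (blab (bface (Hi r) j) @ blab (bface (Hi r) j)) (blab (bface (Hi r) j))"
      using Hi_face mcong.idem by fastforce
    let ?ws = "map (\<lambda>i. blab (bface (Hi r) i)) (rev [1..<Suc ?K])"
    let ?e = "edge bface (Hi r) ?K 0 1"
    have blr: "bl pdim bface r = concat ?ws @ (blab ?e @ blab (bface (Hi r) 0) @ winv (blab ?e))"
      unfolding bl_def using r False by (simp add: Let_def)
    have "le pdim bface [(GP r, False)] (blab (bface (Hi r) i))"
    proof -
      have "\<forall>w\<in>set ?ws. le pdim bface [(GP r, False)] w"
      proof (rule le_concat)
        show "\<forall>w\<in>set ?ws. mcong pdim bface (w @ w) w" using idmB by auto
        show "mcong pdim bface ((blab ?e @ blab (bface (Hi r) 0) @ winv (blab ?e)) @ (blab ?e @ blab (bface (Hi r) 0) @ winv (blab ?e))) (blab ?e @ blab (bface (Hi r) 0) @ winv (blab ?e))"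
          by (rule idm_conj) (use idmB in simp)
        show "le pdim bface [(GP r, False)] (concat ?ws @ blab ?e @ blab (bface (Hi r) 0) @ winv (blab ?e))"
          using rel blr by simp
      qed
      then show ?thesis using i by auto
    qed
    then have le1: "le pdim bface (blab (f D)) (blab (f (face D i)))" using r fface i by simp
    define v' w' where "v' = sh i v" "w' = sh i w"
    have fi: "face D i \<in> cells" "dim (face D i) = ?K - 1" using fcell i by auto
    have v'w': "0 < v'" "v' < w'" "w' \<le> dim (face D i)"
      using less.prems i fi unfolding v'_w'_def sh_def by auto
    have IH: "le pdim bface (blab (f (face D i))) (tri face f (face D i) (dim (face D i)) v' w')"
      using less.hyps[of "face D i", OF _ fi(1) _ v'w'] fi less.prems K3 by simp
    have "tri face f (face D i) (dim (face D i)) v' w' = tri face f D (dim D) v w"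
    proof -
      have s0: "sh i 0 = 0" using i by (simp add: sh_def)
      have "edge face D ?K 0 v = edge face (face D i) (?K - 1) 0 v'"
        using edge_face[where K="dim D", OF ss less.prems(1), of 0 v i] less.prems i s0 v'_w'_def by simp
      moreover have "edge face D ?K v w = edge face (face D i) (?K - 1) v' w'"
        using edge_face[where K="dim D", OF ss less.prems(1), of v w i] less.prems i v'_w'_def by simp
      moreover have "edge face D ?K 0 w = edge face (face D i) (?K - 1) 0 w'"
        using edge_face[where K="dim D", OF ss less.prems(1), of 0 w i] less.prems i s0 v'_w'_def by simp
      ultimately show ?thesis unfolding tri_def using fi by simp
    qed
    then show ?thesis using le_trans[OF le1 IH] by simp
  qed
qed



lemma le_tail:
  assumes "mcong P B (e @ e) e" "le P B e (z @ winv x)"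
  shows "mcong P B (e @ x @ winv x) e"
proof -
  have h: "mcong P B e (e @ z @ winv x)" using assms(2) by (simp add: le_def)
  have "mcong P B (e @ x @ winv x) ((e @ z @ winv x) @ x @ winv x)" by (rule capp[OF h mcong.refl])
  also have "(e @ z @ winv x) @ x @ winv x = (e @ z) @ (winv x @ x @ winv x) @ []" by simp
  also have "mcong P B \<dots> ((e @ z) @ winv x @ [])" by (rule msub[OF mcong.inv1[of P B "winv x", simplified], of _ "e @ z" "[]"]) auto
  also have "mcong P B \<dots> e" using msym[OF h] by simp
  finally show ?thesis .
qed

lemma path_label_Cons2: "path_label face f c k (v # w # ws) =
  (if v < w then blab (f (edge face c k v w)) else winv (blab (f (edge face c k w v)))) @ path_label face f c k (w # ws)"
  by (simp add: path_label_def)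
lemma path_label_single: "path_label face f c k [v] = []"
  by (simp add: path_label_def)

theorem mainTheorem6:
  fixes n :: nat
    and pdim :: "'p \<Rightarrow> nat"
    and bface :: "('x,'p) bcell \<Rightarrow> nat \<Rightarrow> ('x,'p) bcell"
    and cells :: "'c set" and dim :: "'c \<Rightarrow> nat" and face :: "'c \<Rightarrow> nat \<Rightarrow> 'c"
    and f :: "'c \<Rightarrow> ('x,'p) bcell"
    and C :: 'c and ws :: "nat list"
  assumes "\<forall>r. 2 \<le> pdim r \<and> pdim r \<le> n"
    and "semi_simplicial UNIV (bdim pdim) bface"
    and "semi_simplicial cells dim face"
    and "labeling cells dim face pdim bface f"
    and "C \<in> cells" and "2 \<le> dim C"
    and "closed_path (dim C) ws"
  shows "mle pdim bface (blab (f C)) (path_label face f C (dim C) ws)"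
proof -
  note ss = assms(3) and lab = assms(4)
  define K where "K = dim C"
  obtain r where r: "f C = Hi r" using lab_Hi[OF lab assms(5,6)] by blast
  define e where "e = blab (f C)"
  have e: "e = [(GP r, False)]" using r e_def by simp
  have Ie: "mcong pdim bface (e @ e) e" using e mcong.idem by simp
  define a where "a v = (if v = 0 then [] else blab (f (edge face C K 0 v)))" for v
  define s where "s v w = (if v < w then blab (f (edge face C K v w)) else winv (blab (f (edge face C K w v))))" for v w
  have tri: "\<And>v w. 0 < v \<Longrightarrow> v < w \<Longrightarrow> w \<le> K \<Longrightarrow> le pdim bface e (a v @ s v w @ winv (a w))"
  proof -
    fix v w :: nat assume vw: "0 < v" "v < w" "w \<le> K"
    have "le pdim bface e (tri face f C (dim C) v w)"
      using tri_le[OF ss lab assms(5,6)] vw K_def e_def by simp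
    then show "le pdim bface e (a v @ s v w @ winv (a w))" using vw unfolding tri_def a_def s_def K_def by simp
  qed
  have K2: "2 \<le> K" using assms(6) K_def by simp
  have lasso: "\<And>v w. v \<le> K \<Longrightarrow> w \<le> K \<Longrightarrow> v \<noteq> w \<Longrightarrow> mcong pdim bface (e @ a v @ s v w) (e @ a w)"
  proof -
    fix v w :: nat assume vw: "v \<le> K" "w \<le> K" "v \<noteq> w"
    have tail: "\<And>v. 0 < v \<Longrightarrow> v \<le> K \<Longrightarrow> mcong pdim bface (e @ a v @ winv (a v)) e"
    proof -
      fix v :: nat assume v: "0 < v" "v \<le> K"
      show "mcong pdim bface (e @ a v @ winv (a v)) e"
      proof (cases "v = 1")
        case True
        have "le pdim bface e (a 1 @ s 1 2 @ winv (a 2))" using tri[of 1 2] K2 by simp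
        then have "le pdim bface e (winv (a 1 @ s 1 2 @ winv (a 2)))" using le_inv[OF Ie] by blast
        then have "le pdim bface e ((a 2 @ winv (s 1 2)) @ winv (a 1))" by simp
        then show ?thesis using le_tail[OF Ie] True by blast
      next
        case False
        have "le pdim bface e ((a 1 @ s 1 v) @ winv (a v))" using tri[of 1 v] v False by simp
        then show ?thesis using le_tail[OF Ie] by blast
      qed
    qed
    show "mcong pdim bface (e @ a v @ s v w) (e @ a w)"
    proof (cases "v = 0")
      case True
      then show ?thesis using vw by (simp add: a_def s_def mcong.refl)
    next
      case v0: False
      show ?thesis
      proof (cases "w = 0")
        case True
        have "s v w = winv (a v)" using True v0 unfolding s_def a_def by simp
        then show ?thesis using tail[of v] v0 vw True by (simp add: a_def)
      next
        case w0: False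
        show ?thesis
        proof (cases "v < w")
          case True
          then have "le pdim bface e ((a v @ s v w) @ winv (a w))" using tri[of v w] v0 vw by simp
          then show ?thesis using le_G[OF Ie] by simp
        next
          case False
          then have wv: "w < v" using vw by simp
          have "le pdim bface e (a w @ s w v @ winv (a v))" using tri[of w v] w0 wv vw by simp
          then have "le pdim bface e (winv (a w @ s w v @ winv (a v)))" using le_inv[OF Ie] by blast
          moreover have "s v w = winv (s w v)" using wv unfolding s_def by simp
          ultimately have "le pdim bface e ((a v @ s v w) @ winv (a w))" by simp
          then show ?thesis using le_G[OF Ie] by simp
        qed
      qed
    qed
  qed
  have path: "\<And>v. (\<forall>x\<in>set (v#us). x \<le> K) \<Longrightarrow> (\<forall>t. Suc t < length (v#us) \<longrightarrow> (v#us) ! t \<noteq> (v#us) ! Suc t)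
     \<Longrightarrow> mcong pdim bface (e @ a v @ path_label face f C K (v#us)) (e @ a (last (v#us)))" for us
  proof (induct us)
    case Nil
    then show ?case by (simp add: path_label_single mcong.refl)
  next
    case (Cons w us)
    have vw: "v \<le> K" "w \<le> K" "v \<noteq> w" using Cons.prems(1) Cons.prems(2)[rule_format, of 0] by auto
    have pl: "path_label face f C K (v # w # us) = s v w @ path_label face f C K (w # us)"
      unfolding path_label_Cons2 s_def by simp
    have IH: "mcong pdim bface (e @ a w @ path_label face f C K (w#us)) (e @ a (last (w#us)))"
    proof (rule Cons.hyps)
      show "\<forall>x\<in>set (w # us). x \<le> K" using Cons.prems(1) by simp
      show "\<forall>t. Suc t < length (w # us) \<longrightarrow> (w # us) ! t \<noteq> (w # us) ! Suc t"
        using Cons.prems(2) by (metis Suc_less_eq length_Cons nth_Cons_Suc)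
    qed
    have "mcong pdim bface (e @ a v @ path_label face f C K (v # w # us)) ((e @ a v @ s v w) @ path_label face f C K (w # us))"
      using pl by (simp add: mcong.refl)
    also have "mcong pdim bface \<dots> ((e @ a w) @ path_label face f C K (w # us))"
      by (rule capp[OF lasso[OF vw] mcong.refl])
    also have "mcong pdim bface \<dots> (e @ a (last (w#us)))" using IH by simp
    finally show ?case by simp
  qed
  obtain us where ws: "ws = 0 # us" using assms(7) unfolding closed_path_def by (cases ws) auto
  have "mcong pdim bface (e @ a 0 @ path_label face f C K (0#us)) (e @ a (last (0#us)))"
    by (rule path) (use assms(7) ws K_def in \<open>auto simp: closed_path_def\<close>)
  moreover have "last (0#us) = 0" using assms(7) ws unfolding closed_path_def by simp
  ultimately have "mcong pdim bface (e @ path_label face f C K ws) e" using ws by (simp add: a_def)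
  then show ?thesis unfolding mle_def using Ie e_def K_def msym by blast
qed

end
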